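(* Let $\mathcal H$ be the $5$-uniform hypergraph defined below, let $e,f$ be two edges of $\mathcal{H}$, and let $\phi : V(\mathcal{H}_{ef}) \to V(\mathcal{H})$ be a monomorphism. If $\phi(e') = e'$ for every edge $e' \in \mathcal{H}_{ef}$, then $\phi$ is the identity.
   Context: $\mathcal{H}$ has vertex set $\{z, v_1,\dots,v_9\}$ and edges $r=\{z,v_1,v_3,v_5,v_8\}$, $g=\{z,v_2,v_4,v_7,v_9\}$, $a=\{v_1,v_4,v_6,v_8,v_9\}$, $b=\{v_9,v_1,v_2,v_3,v_4\}$, and $e_i=\{v_i,v_{i+1},v_{i+2},v_{i+3},v_{i+4}\}$ for $i=1,\dots,5$. $\mathcal{H}_{ef}$ is the hypergraph with edge set $E(\mathcal H)\setminus\{e,f\}$, and $V(\mathcal H_{ef})$ is the union of its edges. A monomorphism $\phi: V(\mathcal{H}_{ef})\to V(\mathcal{H})$ is an injective map such that $\phi(x):=\{\phi(y): y\in x\}$ is an edge of $\mathcal H$ for every edge $x$ of $\mathcal H_{ef}$; "identity" means $\phi(y)=y$ for all $y\in V(\mathcal H_{ef})$. *)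

theory Defs
  imports Main
begin

text \<open>Vertices: z is encoded as 0 and v_i as the natural number i (1 \<le> i \<le> 9).\<close>

definition z :: nat where "z = 0"

definition edge_r :: "nat set" where "edge_r = {z, 1, 3, 5, 8}"
definition edge_g :: "nat set" where "edge_g = {z, 2, 4, 7, 9}"
definition edge_a :: "nat set" where "edge_a = {1, 4, 6, 8, 9}"
definition edge_b :: "nat set" where "edge_b = {9, 1, 2, 3, 4}"
definition edge_e :: "nat \<Rightarrow> nat set" where "edge_e i = {i, i+1, i+2, i+3, i+4}"

definition H_edges :: "nat set set" where
  "H_edges = {edge_r, edge_g, edge_a, edge_b} \<union> {edge_e i | i. 1 \<le> i \<and> i \<le> 5}"

definition H_vertices :: "nat set" where
  "H_vertices = insert z {1..9}"

definition H_minus_edges :: "nat set \<Rightarrow> nat set \<Rightarrow> nat set set" where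
  "H_minus_edges e f = H_edges - {e, f}"

definition H_minus_vertices :: "nat set \<Rightarrow> nat set \<Rightarrow> nat set" where
  "H_minus_vertices e f = \<Union> (H_minus_edges e f)"

definition monomorphism :: "nat set \<Rightarrow> nat set \<Rightarrow> (nat \<Rightarrow> nat) \<Rightarrow> bool" where
  "monomorphism e f \<phi> \<longleftrightarrow>
     inj_on \<phi> (H_minus_vertices e f) \<and>
     \<phi> ` H_minus_vertices e f \<subseteq> H_vertices \<and>
     (\<forall>x \<in> H_minus_edges e f. \<phi> ` x \<in> H_edges)"

end

theory Submission
  imports Defs
begin

definition L :: "nat set list" where
  "L = [{0,1,3,5,8},{0,2,4,7,9},{1,4,6,8,9},{9,1,2,3,4},
        {1,2,3,4,5},{2,3,4,5,6},{3,4,5,6,7},{4,5,6,7,8},{5,6,7,8,9}]"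

lemma L2: "L = [edge_r, edge_g, edge_a, edge_b, edge_e 1, edge_e 2, edge_e 3, edge_e 4, edge_e 5]"
  unfolding L_def edge_r_def edge_g_def edge_a_def edge_b_def z_def edge_e_def by (simp add: numeral_eq_Suc)
lemma HL: "H_edges = set L"
proof -
  have "{edge_e i | i. 1 \<le> i \<and> i \<le> 5} = edge_e ` {1..5}" by auto
  also have "{1..5::nat} = {1,2,3,4,5}" by auto
  finally show ?thesis
    unfolding H_edges_def L2 by (simp only: set_simps) blast
qed
lemma cnt: "list_all (\<lambda>y. list_all (\<lambda>w. y = w \<or> 3 \<le> length (filter (\<lambda>x. (w\<in>x) \<noteq> (y\<in>x)) L)) [0..<10]) [0..<10]"
  unfolding L_def by code_simp

lemma dL: "distinct L" unfolding L_def by code_simp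

lemma cnt':
  assumes "y < 10" "w < 10" "y \<noteq> w"
  shows "3 \<le> length (filter (\<lambda>x. (w\<in>x) \<noteq> (y\<in>x)) L)"
proof -
  have yy: "y \<in> set [0..<10]" and ww: "w \<in> set [0..<10]" using assms(1,2) by simp_all
  have "\<forall>w\<in>set [0..<10]. y = w \<or> 3 \<le> length (filter (\<lambda>x. (w\<in>x) \<noteq> (y\<in>x)) L)"
    using cnt yy unfolding list_all_iff by (rule bspec)
  then have "y = w \<or> 3 \<le> length (filter (\<lambda>x. (w\<in>x) \<noteq> (y\<in>x)) L)"
    using ww by (rule bspec)
  then show ?thesis using assms(3) by blast
qed

lemma three:
  assumes "distinct xs" "3 \<le> length (filter P xs)"
  shows "\<exists>x\<in>set xs. P x \<and> x \<noteq> e \<and> x \<noteq> f"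
proof (rule ccontr)
  assume "\<not> ?thesis"
  then have "set (filter P xs) \<subseteq> {e, f}" by auto
  then have "card (set (filter P xs)) \<le> card {e, f}" by (intro card_mono) auto
  also have "\<dots> \<le> 2" by (simp add: card_insert_le_m1)
  finally show False using assms distinct_card[of "filter P xs"] by simp
qed

lemma Lsmall: "x \<in> set L \<Longrightarrow> y \<in> x \<Longrightarrow> y < 10"
  unfolding L_def by auto

theorem lemma4p4:
  assumes "e \<in> H_edges" and "f \<in> H_edges" and "e \<noteq> f"
    and "monomorphism e f \<phi>"
    and "\<forall>x \<in> H_minus_edges e f. \<phi> ` x = x"
  shows "\<forall>y \<in> H_minus_vertices e f. \<phi> y = y"
proof
  fix y assume y: "y \<in> H_minus_vertices e f"
  have inj: "inj_on \<phi> (H_minus_vertices e f)" and img: "\<phi> y \<in> H_vertices"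
    using assms(4) y unfolding monomorphism_def by auto
  have key: "\<phi> y \<in> x \<longleftrightarrow> y \<in> x" if x: "x \<in> H_minus_edges e f" for x
  proof
    assume "y \<in> x" then show "\<phi> y \<in> x" using assms(5) x by blast
  next
    assume "\<phi> y \<in> x"
    then have "\<phi> y \<in> \<phi> ` x" using assms(5) x by simp
    then obtain z where z: "z \<in> x" "\<phi> z = \<phi> y" by auto
    have "z \<in> H_minus_vertices e f" using z x unfolding H_minus_vertices_def by auto
    then have "z = y" using inj y z(2) by (auto dest: inj_onD)
    then show "y \<in> x" using z by simp
  qed
  obtain x0 where x0: "x0 \<in> H_minus_edges e f" "y \<in> x0"
    using y unfolding H_minus_vertices_def by auto
  have y10: "y < 10"
    using x0 Lsmall unfolding H_minus_edges_def HL by auto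
  have w10: "\<phi> y < 10" using img unfolding H_vertices_def z_def by auto
  show "\<phi> y = y"
  proof (rule ccontr)
    assume ne: "\<phi> y \<noteq> y"
    obtain x where x: "x \<in> set L" "(\<phi> y \<in> x) \<noteq> (y \<in> x)" "x \<noteq> e" "x \<noteq> f"
      using three[OF dL cnt'[OF y10 w10 ne[symmetric]], of e f] by blast
    have "x \<in> H_minus_edges e f" using x unfolding H_minus_edges_def HL by auto
    then show False using key x(2) by blast
  qed
qed

end
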